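(* Let $N,P>0$ and $L\in\mathbb{Z}_{\ge2}$. If there is a $(P,N,L-1)$-list-decodable code $\mathcal{C}\subset\mathcal{B}^n(\sqrt{nP})$ of rate $R$, then there exists a code $\mathcal{C}'\subset\mathcal{S}^n(0,\sqrt{(n+1)P})\subset\mathbb{R}^{n+1}$ with $|\mathcal{C}'|=|\mathcal{C}|$ (so of rate $R$ asymptotically) which is $\left(P,\frac{nN}{n+1},L-1\right)$-list-decodable in $\mathbb{R}^{n+1}$, i.e. every ball in $\mathbb{R}^{n+1}$ of radius $\sqrt{(n+1)\cdot\frac{nN}{n+1}}=\sqrt{nN}$ contains at most $L-1$ points of $\mathcal{C}'$.
   Context: $\mathcal{B}^m(y,r)$ is the closed Euclidean ball in $\mathbb{R}^m$ of radius $r$ centered at $y$, $\mathcal{B}^m(r)=\mathcal{B}^m(0,r)$, and $\mathcal{S}^{m-1}(0,r)=\{x\in\mathbb{R}^m:\|x\|_2=r\}$. For $P,N>0$, $L\in\mathbb{Z}_{\ge2}$, a finite set $\mathcal{C}\subseteq\mathcal{B}^m(\sqrt{mP})$ is $(P,N,L-1)$-list-decodable if $|\mathcal{C}\cap\mathcal{B}^m(y,\sqrt{mN})|\le L-1$ for every $y\in\mathbb{R}^m$. Its rate is $\frac1m\ln|\mathcal{C}|$. *)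

theory Defs
  imports "HOL-Analysis.Analysis"
begin

definition list_decodable :: "real \<Rightarrow> real \<Rightarrow> nat \<Rightarrow> 'a::euclidean_space set \<Rightarrow> bool" where
  "list_decodable P N L C \<longleftrightarrow>
     finite C \<and> C \<subseteq> cball 0 (sqrt (real DIM('a) * P)) \<and>
     (\<forall>y. card (C \<inter> cball y (sqrt (real DIM('a) * N))) \<le> L - 1)"

definition code_rate :: "'a::euclidean_space set \<Rightarrow> real" where
  "code_rate C = ln (real (card C)) / real DIM('a)"

end

theory Submission
  imports Defs
begin

lemma embed_exists:
  assumes "CARD('m) = CARD('n) + 1"
  shows "\<exists>(e::'n::finite \<Rightarrow> 'm::finite) k. inj e \<and> k \<notin> range e \<and> UNIV = insert k (range e)"
proof -
  have "CARD('n) \<le> CARD('m)" using assms by simp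
  then obtain e :: "'n \<Rightarrow> 'm" where e: "inj_on e UNIV"
    using card_le_inj[of "UNIV::'n set" "UNIV::'m set"] by auto
  have cr: "card (range e) = CARD('n)" using e card_image by blast
  have lt: "card (range e) < CARD('m)" using cr assms by simp
  have "range e \<noteq> UNIV"
  proof
    assume "range e = UNIV" then show False using lt by simp
  qed
  then obtain k where k: "k \<notin> range e" by blast
  have "card (insert k (range e)) = CARD('m)" using k cr assms by simp
  then have "insert k (range e) = UNIV"
    by (metis card_subset_eq finite subset_UNIV)
  then show ?thesis using e k by metis
qed

lemma inner_split:
  fixes z :: "real ^ 'm"
  assumes e: "inj (e::'n::finite \<Rightarrow> 'm)" and k: "k \<notin> range e" and U: "UNIV = insert k (range e)"
  shows "z \<bullet> z = (z $ k)^2 + (\<chi> j. z $ e j) \<bullet> (\<chi> j. z $ e j)"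
proof -
  have "z \<bullet> z = (\<Sum>i\<in>insert k (range e). z $ i * z $ i)"
    unfolding inner_vec_def using U by simp
  also have "\<dots> = z $ k * z $ k + (\<Sum>i\<in>range e. z $ i * z $ i)"
    using k by (simp add: sum.insert)
  also have "(\<Sum>i\<in>range e. z $ i * z $ i) = (\<Sum>j\<in>UNIV. z $ e j * z $ e j)"
    using sum.reindex[OF e] by simp
  finally show ?thesis by (simp add: inner_vec_def power2_eq_square)
qed

theorem mainTheorem3:
  fixes C :: "(real ^ 'n) set" and P N R :: real and L :: nat
  assumes "CARD('m) = CARD('n) + 1"
    and "P > 0" and "N > 0" and "L \<ge> 2"
    and "list_decodable P N L C"
    and "code_rate C = R"
  shows "\<exists>C' :: (real ^ 'm) set.
           C' \<subseteq> sphere 0 (sqrt (real (CARD('n) + 1) * P)) \<and>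
           card C' = card C \<and>
           list_decodable P (real CARD('n) * N / real (CARD('n) + 1)) L C'"
proof -
  obtain e :: "'n \<Rightarrow> 'm" and k where e: "inj e" and k: "k \<notin> range e"
    and U: "UNIV = insert k (range e)"
    using embed_exists[OF assms(1)] by blast
  have LD: "finite C" "C \<subseteq> cball 0 (sqrt (real CARD('n) * P))"
    "\<And>y. card (C \<inter> cball y (sqrt (real CARD('n) * N))) \<le> L - 1"
    using assms(5) unfolding list_decodable_def by auto
  define n where "n = real CARD('n)"
  define q where "q x = sqrt ((n+1)*P - (norm x)^2)" for x :: "real^'n"
  define F where "F x = (\<chi> i. if i = k then q x else x $ inv e i)" for x :: "real^'n"
  define Pr where "Pr z = (\<chi> j. z $ e j)" for z :: "real^'m"
  have PrF: "Pr (F x) = x" for x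
    using k e by (auto simp: Pr_def F_def vec_eq_iff inv_f_f)
  have split: "z \<bullet> z = (z $ k)^2 + Pr z \<bullet> Pr z" for z
    unfolding Pr_def by (rule inner_split[OF e k U])
  have Fk: "F x $ k = q x" for x by (simp add: F_def)
  have Prnorm: "norm (Pr z) \<le> norm z" for z
  proof -
    have "(norm (Pr z))^2 \<le> (norm z)^2"
      using split[of z] by (simp add: power2_norm_eq_inner)
    then show ?thesis by (rule power2_le_imp_le) simp
  qed
  have Prlin: "Pr a - Pr b = Pr (a - b)" for a b by (simp add: Pr_def vec_eq_iff)
  have normF: "norm (F x) = sqrt ((n+1) * P)" if "x \<in> C" for x
  proof -
    have "norm x \<le> sqrt (n * P)" using LD(2) that n_def by auto
    moreover have "0 \<le> n * P" using assms(2) n_def by simp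
    ultimately have "(norm x)^2 \<le> (sqrt (n * P))^2" by (intro power_mono) auto
    then have "(norm x)^2 \<le> n * P" using \<open>0 \<le> n * P\<close> by simp
    then have h: "(q x)^2 = (n+1)*P - (norm x)^2" unfolding q_def using assms(2) by (simp add: algebra_simps)
    have "(norm (F x))^2 = (q x)^2 + (norm x)^2"
      using split[of "F x"] by (simp add: power2_norm_eq_inner PrF Fk)
    then have "(norm (F x))^2 = (n+1)*P" using h by simp
    then show ?thesis by (simp add: real_sqrt_unique)
  qed
  have injF: "inj_on F C" by (rule inj_on_inverseI[where g=Pr]) (rule PrF)
  define C' where "C' = F ` C"
  have sph: "C' \<subseteq> sphere 0 (sqrt (real (CARD('n) + 1) * P))"
    using normF unfolding C'_def n_def by auto
  have cardC: "card C' = card C" unfolding C'_def using injF card_image by blast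
  have rad: "sqrt (real DIM(real^'m) * (real CARD('n) * N / real (CARD('n) + 1)))
      = sqrt (real CARD('n) * N)"
    using assms(1) by simp
  have balls: "card (C' \<inter> cball y (sqrt (real CARD('n) * N))) \<le> L - 1" for y
  proof -
    have "C' \<inter> cball y (sqrt (real CARD('n) * N)) \<subseteq> F ` (C \<inter> cball (Pr y) (sqrt (real CARD('n) * N)))"
    proof
      fix z assume z: "z \<in> C' \<inter> cball y (sqrt (real CARD('n) * N))"
      then obtain x where x: "x \<in> C" "z = F x" unfolding C'_def by auto
      have "dist (Pr y) x = norm (Pr (y - F x))" using PrF[of x] Prlin[of y "F x"]
        by (simp add: dist_norm)
      also have "\<dots> \<le> norm (y - F x)" by (rule Prnorm)
      also have "\<dots> \<le> sqrt (real CARD('n) * N)" using z x by (simp add: dist_norm)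
      finally show "z \<in> F ` (C \<inter> cball (Pr y) (sqrt (real CARD('n) * N)))"
        using x by auto
    qed
    then have "card (C' \<inter> cball y (sqrt (real CARD('n) * N))) \<le> card (F ` (C \<inter> cball (Pr y) (sqrt (real CARD('n) * N))))"
      using LD(1) by (intro card_mono) auto
    also have "\<dots> \<le> card (C \<inter> cball (Pr y) (sqrt (real CARD('n) * N)))" by (rule card_image_le) (simp add: LD(1))
    also have "\<dots> \<le> L - 1" by (rule LD(3))
    finally show ?thesis .
  qed
  have "list_decodable P (real CARD('n) * N / real (CARD('n) + 1)) L C'"
    unfolding list_decodable_def
  proof (intro conjI allI)
    show "finite C'" using LD(1) C'_def by simp
    show "C' \<subseteq> cball 0 (sqrt (real DIM(real ^ 'm) * P))"
      using sph assms(1) by auto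
    fix y show "card (C' \<inter> cball y (sqrt (real DIM(real ^ 'm) * (real CARD('n) * N / real (CARD('n) + 1))))) \<le> L - 1"
      using balls rad by simp
  qed
  then show ?thesis using sph cardC by blast
qed

end
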